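(* Let $N \ge 1$. Then: (1) $f(N,1)=0$. (2) $f(N+1,\Delta) \geq f(N,\Delta)+1$ for $N \geq \Delta \geq 2$. (3) $f(N,\Delta+1) \geq f(N,\Delta)+1$ for $\Delta \ge 1$ and $N > \binom{\Delta+1}{2}$. (4) For $\Delta+1 \le N$: if $\Delta > \frac{N}{2}$ then $f(N,\Delta+1) \geq f(N,\Delta)$, and if $\Delta > \lceil \frac{N}{2} \rceil$ then $f(N,\Delta+1) \geq f(N,\Delta)+1$.
   Context: All graphs are finite and simple; $L(G)$ is the line graph of $G$; $e(\cdot)$, $\Delta(\cdot)$, $\delta(\cdot)$ denote number of edges, maximum degree and minimum degree. For integers $N \ge \Delta \ge 1$, $f(N,\Delta) = \max\{ e(L(G)) : e(G)=N, \Delta(G)=\Delta, \delta(G)\geq 1\}$, the maximum over all simple graphs $G$. *)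

theory Defs
  imports Complex_Main
begin

text \<open>A finite simple graph without isolated vertices is represented by its edge set:
  a finite set of 2-element vertex sets (vertices taken from nat; every finite graph
  is isomorphic to one on nat). Its vertex set is the union of its edges, so
  minimum degree is at least 1 by construction.\<close>

definition simple_graph :: "nat set set \<Rightarrow> bool" where
  "simple_graph E \<longleftrightarrow> finite E \<and> (\<forall>e\<in>E. card e = 2)"

definition verts :: "nat set set \<Rightarrow> nat set" where
  "verts E = \<Union>E"

definition deg :: "nat set set \<Rightarrow> nat \<Rightarrow> nat" where
  "deg E v = card {e\<in>E. v \<in> e}"

definition max_deg :: "nat set set \<Rightarrow> nat" where
  "max_deg E = Max (deg E ` verts E)"

definition min_deg :: "nat set set \<Rightarrow> nat" where
  "min_deg E = Min (deg E ` verts E)"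

definition line_graph_edges :: "nat set set \<Rightarrow> nat" where
  "line_graph_edges E = card {{e1, e2} | e1 e2. e1 \<in> E \<and> e2 \<in> E \<and> e1 \<noteq> e2 \<and> e1 \<inter> e2 \<noteq> {}}"

definition f :: "nat \<Rightarrow> nat \<Rightarrow> nat" where
  "f N D = Max {line_graph_edges E | E. simple_graph E \<and> card E = N \<and> max_deg E = D \<and> min_deg E \<ge> 1}"

end

theory Submission
  imports Defs
begin


definition lpairs :: "nat set set \<Rightarrow> nat set set set" where
  "lpairs E = {{e1, e2} | e1 e2. e1 \<in> E \<and> e2 \<in> E \<and> e1 \<noteq> e2 \<and> e1 \<inter> e2 \<noteq> {}}"

lemma L_lpairs: "line_graph_edges E = card (lpairs E)"
  by (simp add: line_graph_edges_def lpairs_def)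

lemma lpairs_Pow: "lpairs E \<subseteq> Pow E"
  unfolding lpairs_def by auto

lemma two_elems: "card e = 2 \<Longrightarrow> a \<in> e \<Longrightarrow> b \<in> e \<Longrightarrow> a \<noteq> b \<Longrightarrow> e = {a, b}"
  by (auto simp: card_2_iff)

lemma L_insert:
  assumes fin: "finite E" and two: "\<forall>e'\<in>E. card e' = 2" and xy: "x \<noteq> y" and notin: "{x,y} \<notin> E"
  shows "line_graph_edges (insert {x,y} E) = line_graph_edges E + deg E x + deg E y"
proof -
  let ?e = "{x,y}"
  define Q where "Q = (\<lambda>e2. {?e, e2}) ` {e2\<in>E. e2 \<inter> ?e \<noteq> {}}"
  have split: "lpairs (insert ?e E) = lpairs E \<union> Q"
  proof
    show "lpairs (insert ?e E) \<subseteq> lpairs E \<union> Q"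
    proof
      fix p assume "p \<in> lpairs (insert ?e E)"
      then obtain e1 e2 where p: "p = {e1,e2}" and h: "e1 \<in> insert ?e E" "e2 \<in> insert ?e E"
        "e1 \<noteq> e2" "e1 \<inter> e2 \<noteq> {}" unfolding lpairs_def by blast
      show "p \<in> lpairs E \<union> Q"
      proof (cases "e1 = ?e")
        case True
        then have "e2 \<in> {e2\<in>E. e2 \<inter> ?e \<noteq> {}}" using h by blast
        then show ?thesis unfolding Q_def p True by blast
      next
        case f1: False
        show ?thesis
        proof (cases "e2 = ?e")
          case True
          then have "e1 \<in> {e2\<in>E. e2 \<inter> ?e \<noteq> {}}" using h f1 by blast
          moreover have "p = {?e, e1}" using p True by (simp add: insert_commute)
          ultimately show ?thesis unfolding Q_def by blast
        next
          case False
          then have "p \<in> lpairs E" unfolding lpairs_def p using h f1 by blast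
          then show ?thesis by blast
        qed
      qed
    qed
    show "lpairs E \<union> Q \<subseteq> lpairs (insert ?e E)"
      unfolding lpairs_def Q_def using notin by blast
  qed
  have disj: "lpairs E \<inter> Q = {}"
    using lpairs_Pow[of E] notin unfolding Q_def by auto
  have finP: "finite (lpairs E)" using lpairs_Pow[of E] fin finite_subset by blast
  have finQ: "finite Q" unfolding Q_def using fin by simp
  have inj: "inj_on (\<lambda>e2. {?e, e2}) {e2\<in>E. e2 \<inter> ?e \<noteq> {}}"
    unfolding inj_on_def using notin by (auto simp: doubleton_eq_iff)
  have cardQ: "card Q = card {e2\<in>E. e2 \<inter> ?e \<noteq> {}}"
    unfolding Q_def using inj card_image by blast
  have un: "{e2\<in>E. e2 \<inter> ?e \<noteq> {}} = {e2\<in>E. x\<in>e2} \<union> {e2\<in>E. y\<in>e2}" by auto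
  have dj: "{e2\<in>E. x\<in>e2} \<inter> {e2\<in>E. y\<in>e2} = {}"
  proof (rule ccontr)
    assume "{e2\<in>E. x\<in>e2} \<inter> {e2\<in>E. y\<in>e2} \<noteq> {}"
    then obtain e2 where "e2 \<in> E" "x \<in> e2" "y \<in> e2" by auto
    then have "e2 = ?e" using two_elems[of e2 x y] two xy by simp
    then show False using \<open>e2 \<in> E\<close> notin by simp
  qed
  have "card {e2\<in>E. e2 \<inter> ?e \<noteq> {}} = deg E x + deg E y"
    unfolding un deg_def using dj fin by (simp add: card_Un_disjoint)
  then show ?thesis
    unfolding L_lpairs split using card_Un_disjoint[OF finP finQ disj] cardQ by simp
qed

lemma deg_insert:
  assumes "finite E" "e \<notin> E"
  shows "deg (insert e E) z = deg E z + (if z \<in> e then 1 else 0)"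
proof -
  have "{e'\<in>insert e E. z \<in> e'} = (if z \<in> e then insert e {e'\<in>E. z \<in> e'} else {e'\<in>E. z \<in> e'})"
    by auto
  then show ?thesis unfolding deg_def using assms by simp
qed

lemma deg_remove:
  assumes "finite E" "e \<in> E"
  shows "deg E z = deg (E - {e}) z + (if z \<in> e then 1 else 0)"
  using deg_insert[of "E - {e}" e z] assms by (simp add: insert_absorb)

lemma deg_le_card: "finite E \<Longrightarrow> deg E z \<le> card E"
  unfolding deg_def by (rule card_mono) auto

lemma deg_zero: "z \<notin> verts E \<Longrightarrow> deg E z = 0"
proof -
  assume "z \<notin> verts E"
  then have "{e\<in>E. z \<in> e} = {}" unfolding verts_def by blast
  then show ?thesis unfolding deg_def by (simp only: card.empty)
qed

lemma verts_finite: "simple_graph E \<Longrightarrow> finite (verts E)"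
proof -
  assume "simple_graph E"
  then have "finite E" "\<forall>e\<in>E. finite e" unfolding simple_graph_def
    by (auto intro: card_ge_0_finite)
  then show ?thesis unfolding verts_def by (intro finite_Union) auto
qed

lemma deg_pos: "simple_graph E \<Longrightarrow> z \<in> verts E \<Longrightarrow> deg E z \<ge> 1"
proof -
  assume sg: "simple_graph E" and "z \<in> verts E"
  then obtain e where e: "e \<in> E" "z \<in> e" unfolding verts_def by blast
  have "finite {e\<in>E. z \<in> e}" using sg unfolding simple_graph_def by simp
  moreover have "{e\<in>E. z \<in> e} \<noteq> {}" using e by blast
  ultimately have "card {e\<in>E. z \<in> e} > 0" by (simp only: card_gt_0_iff) simp
  then show ?thesis unfolding deg_def by simp
qed

lemma simple_diff: "simple_graph E \<Longrightarrow> simple_graph (E - A)"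
  unfolding simple_graph_def by auto

lemma simple_insert: "simple_graph E \<Longrightarrow> a \<noteq> b \<Longrightarrow> simple_graph (insert {a,b} E)"
  unfolding simple_graph_def by auto

lemma fresh_notin: "w \<notin> verts G \<Longrightarrow> e \<in> G \<Longrightarrow> w \<notin> e"
  unfolding verts_def by auto

definition valid :: "nat set set \<Rightarrow> nat \<Rightarrow> nat \<Rightarrow> bool" where
  "valid E N D \<longleftrightarrow> simple_graph E \<and> card E = N \<and> max_deg E = D \<and> min_deg E \<ge> 1"

lemma f_alt: "f N D = Max {line_graph_edges E | E. valid E N D}"
  by (simp add: f_def valid_def)

lemma valid_intro:
  assumes sg: "simple_graph E" and c: "card E = N" and N: "1 \<le> N" and D: "1 \<le> D"
    and le: "\<And>z. deg E z \<le> D" and v: "deg E v = D"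
  shows "valid E N D"
proof -
  have fv: "finite (verts E)" using verts_finite sg by blast
  have vin: "v \<in> verts E"
  proof (rule ccontr)
    assume "v \<notin> verts E" then have "deg E v = 0" by (rule deg_zero)
    then show False using v D by simp
  qed
  have "max_deg E = D" unfolding max_deg_def
    by (rule Max_eqI) (use fv le v vin in auto)
  moreover have "min_deg E \<ge> 1" unfolding min_deg_def
    using fv vin deg_pos[OF sg] by (subst Min_ge_iff) auto
  ultimately show ?thesis using sg c unfolding valid_def by simp
qed

lemma valid_dest:
  assumes "valid E N D" "1 \<le> N"
  shows "simple_graph E \<and> card E = N \<and> (\<forall>z. deg E z \<le> D) \<and> (\<exists>v. deg E v = D)"
proof -
  have sg: "simple_graph E" and c: "card E = N" and m: "max_deg E = D"
    using assms unfolding valid_def by auto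
  have fv: "finite (verts E)" using verts_finite sg by blast
  have "E \<noteq> {}" using c assms(2) by auto
  then obtain e where e: "e \<in> E" by blast
  then have "card e = 2" using sg unfolding simple_graph_def by blast
  then have "e \<noteq> {}" by auto
  then obtain w where "w \<in> e" by blast
  then have ne: "verts E \<noteq> {}" using e unfolding verts_def by blast
  have "\<forall>z. deg E z \<le> D"
  proof
    fix z show "deg E z \<le> D"
    proof (cases "z \<in> verts E")
      case True
      have "deg E z \<le> Max (deg E ` verts E)" by (rule Max_ge) (use fv True in auto)
      then show ?thesis using m unfolding max_deg_def by simp
    next
      case False then show ?thesis using deg_zero by simp
    qed
  qed
  moreover have "D \<in> deg E ` verts E" unfolding m[symmetric] max_deg_def
    by (rule Max_in) (use fv ne in auto)
  ultimately show ?thesis using sg c by auto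
qed

lemma f_ge:
  assumes "valid E N D" shows "line_graph_edges E \<le> f N D"
proof -
  have sub: "{line_graph_edges E | E. valid E N D} \<subseteq> {..2^N}"
  proof
    fix x assume "x \<in> {line_graph_edges E | E. valid E N D}"
    then obtain E' where x: "x = line_graph_edges E'" and v: "valid E N D" "valid E' N D" using assms by auto
    have fin: "finite E'" "card E' = N" using v(2) unfolding valid_def simple_graph_def by auto
    have "card (lpairs E') \<le> card (Pow E')" using lpairs_Pow fin by (intro card_mono) auto
    then show "x \<in> {..2^N}" using x fin by (simp add: L_lpairs card_Pow)
  qed
  then have "finite {line_graph_edges E | E. valid E N D}" using finite_subset by blast
  then show ?thesis unfolding f_alt using assms by (intro Max_ge) auto
qed

lemma f_attained:
  assumes "\<exists>E. valid E N D" shows "\<exists>E. valid E N D \<and> line_graph_edges E = f N D"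
proof -
  have sub: "{line_graph_edges E | E. valid E N D} \<subseteq> {..2^N}"
  proof
    fix x assume "x \<in> {line_graph_edges E | E. valid E N D}"
    then obtain E' where x: "x = line_graph_edges E'" and v: "valid E' N D" by auto
    have fin: "finite E'" "card E' = N" using v unfolding valid_def simple_graph_def by auto
    have "card (lpairs E') \<le> card (Pow E')" using lpairs_Pow fin by (intro card_mono) auto
    then show "x \<in> {..2^N}" using x fin by (simp add: L_lpairs card_Pow)
  qed
  then have "finite {line_graph_edges E | E. valid E N D}" using finite_subset by blast
  moreover have "{line_graph_edges E | E. valid E N D} \<noteq> {}" using assms by auto
  ultimately have "f N D \<in> {line_graph_edges E | E. valid E N D}" unfolding f_alt by (rule Max_in)
  then show ?thesis by auto
qed



lemma exists_graph:
  assumes D: "1 \<le> D"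
  shows "\<exists>E. simple_graph E \<and> card E = D + k \<and> (\<forall>z. deg E z \<le> D) \<and> deg E 0 = D"
proof (induction k)
  case 0
  define S where "S = (\<lambda>i. {0::nat, i}) ` {1..D}"
  have inj: "inj_on (\<lambda>i. {0::nat,i}) {1..D}" unfolding inj_on_def by (auto simp: doubleton_eq_iff)
  have cS: "card S = D" unfolding S_def using card_image[OF inj] by simp
  have sg: "simple_graph S" unfolding simple_graph_def S_def by auto
  have fS: "finite S" unfolding S_def by simp
  have "{e\<in>S. 0 \<in> e} = S" unfolding S_def by auto
  hence "deg S 0 = D" unfolding deg_def using cS by simp
  moreover have "\<forall>z. deg S z \<le> D" using deg_le_card[OF fS] cS by simp
  ultimately show ?case using sg cS by auto
next
  case (Suc k)
  then obtain E where E: "simple_graph E" "card E = D + k" "\<forall>z. deg E z \<le> D" "deg E 0 = D" by blast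
  have fv: "finite (verts E)" using verts_finite E(1) .
  obtain m where m: "\<forall>x\<in>verts E. x < m" using fv finite_nat_set_iff_bounded by blast
  define a where "a = Suc m"
  have na: "a \<notin> verts E" "Suc a \<notin> verts E" using m a_def by auto
  have fE: "finite E" using E(1) simple_graph_def by auto
  have notin: "{a, Suc a} \<notin> E" using na fresh_notin by blast
  define E' where "E' = insert {a, Suc a} E"
  have sg: "simple_graph E'" unfolding E'_def by (rule simple_insert[OF E(1)]) simp
  have c: "card E' = D + Suc k" unfolding E'_def using fE notin E(2) by simp
  have dg: "\<And>z. deg E' z = deg E z + (if z \<in> {a, Suc a} then 1 else 0)"
    unfolding E'_def by (rule deg_insert[OF fE notin])
  have "\<forall>z. deg E' z \<le> D"
  proof
    fix z show "deg E' z \<le> D"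
    proof (cases "z \<in> {a, Suc a}")
      case True then have "deg E z = 0" using na deg_zero by auto
      then show ?thesis using dg[of z] True D by simp
    next
      case False then show ?thesis using dg[of z] E(3) by simp
    qed
  qed
  moreover have "deg E' 0 = D" using dg[of 0] E(4) a_def by simp
  ultimately show ?case using sg c by blast
qed

lemma exists_valid:
  assumes "1 \<le> D" "D \<le> N" shows "\<exists>E. valid E N D"
proof -
  obtain E where E: "simple_graph E" "card E = D + (N - D)" "\<forall>z. deg E z \<le> D" "deg E 0 = D"
    using exists_graph[OF assms(1), of "N - D"] by blast
  have "valid E N D" by (rule valid_intro[OF E(1) _ _ assms(1) _ E(4)]) (use E assms in auto)
  then show ?thesis by blast
qed

lemma attained:
  assumes "1 \<le> D" "D \<le> N" shows "\<exists>G. valid G N D \<and> line_graph_edges G = f N D"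
  using f_attained exists_valid[OF assms] by blast

lemma part1:
  assumes N: "1 \<le> N" shows "f N 1 = 0"
proof -
  obtain G where G: "valid G N 1" "line_graph_edges G = f N 1" using attained N by blast
  have sg: "simple_graph G" and le: "\<forall>z. deg G z \<le> 1" using valid_dest[OF G(1) N] by auto
  have fG: "finite G" using sg simple_graph_def by auto
  have "lpairs G = {}"
  proof (rule ccontr)
    assume "lpairs G \<noteq> {}"
    then obtain e1 e2 where h: "e1 \<in> G" "e2 \<in> G" "e1 \<noteq> e2" "e1 \<inter> e2 \<noteq> {}"
      unfolding lpairs_def by blast
    then obtain w where w: "w \<in> e1" "w \<in> e2" by blast
    have "{e1, e2} \<subseteq> {e\<in>G. w \<in> e}" using h w by blast
    then have "card {e1,e2} \<le> deg G w" unfolding deg_def by (rule card_mono[rotated]) (use fG in simp)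
    then show False using h(3) le[rule_format, of w] by (simp)
  qed
  then show ?thesis using G(2) by (simp add: L_lpairs)
qed



lemma fresh_vertex: "simple_graph G \<Longrightarrow> \<exists>w. w \<notin> verts G"
  using verts_finite ex_new_if_finite infinite_UNIV_nat by blast

lemma edge_verts: "e \<in> G \<Longrightarrow> u \<in> e \<Longrightarrow> u \<in> verts G"
  unfolding verts_def by blast

lemma part2:
  assumes N: "1 \<le> N" and DN: "D \<le> N" and D: "2 \<le> D"
  shows "f N D + 1 \<le> f (N+1) D"
proof -
  have D1: "1 \<le> D" using D by simp
  obtain G where G: "valid G N D" "line_graph_edges G = f N D" using attained[OF D1 DN] by blast
  have sg: "simple_graph G" and cG: "card G = N" and le: "\<forall>z. deg G z \<le> D"
    and "\<exists>v. deg G v = D" using valid_dest[OF G(1) N] by auto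
  then obtain v0 where v0: "deg G v0 = D" by blast
  have fG: "finite G" and two: "\<forall>e\<in>G. card e = 2" using sg simple_graph_def by auto
  obtain e where eG: "e \<in> G" using cG N by fastforce
  then have "card e = 2" using two by blast
  then obtain u v where uv: "e = {u,v}" "u \<noteq> v" unfolding card_2_iff by blast
  obtain w where w: "w \<notin> verts G" using fresh_vertex sg by blast
  have uw: "u \<noteq> w" "v \<noteq> w" using w edge_verts[OF eG] uv by auto
  define G0 where "G0 = G - {e}"
  define G1 where "G1 = insert {u,w} G0"
  define G2 where "G2 = insert {v,w} G1"
  have fG0: "finite G0" "finite G1" using fG unfolding G0_def G1_def by auto
  have wG: "\<And>e'. e' \<in> G \<Longrightarrow> w \<notin> e'" using w fresh_notin by blast
  have n1: "{u,w} \<notin> G0" using wG unfolding G0_def by blast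
  have n2: "{v,w} \<notin> G1" using wG uv uw unfolding G1_def G0_def by (auto simp: doubleton_eq_iff)
  have n0: "e \<notin> G0" unfolding G0_def by simp
  have hG: "G = insert {u,v} G0" using eG uv unfolding G0_def by auto
  have two0: "\<forall>e'\<in>G0. card e' = 2" using two unfolding G0_def by auto
  have two1: "\<forall>e'\<in>G1. card e' = 2" using two0 uw unfolding G1_def by auto
  have L1: "line_graph_edges G = line_graph_edges G0 + deg G0 u + deg G0 v"
    unfolding hG by (rule L_insert[OF fG0(1) two0 uv(2)]) (use n0 uv in simp)
  have L2: "line_graph_edges G1 = line_graph_edges G0 + deg G0 u + deg G0 w"
    unfolding G1_def by (rule L_insert[OF fG0(1) two0 uw(1) n1])
  have L3: "line_graph_edges G2 = line_graph_edges G1 + deg G1 v + deg G1 w"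
    unfolding G2_def by (rule L_insert[OF fG0(2) two1 uw(2) n2])
  have dG: "\<And>z. deg G z = deg G0 z + (if z \<in> {u,v} then 1 else 0)"
    unfolding G0_def using deg_remove[OF fG eG] uv by simp
  have d1: "\<And>z. deg G1 z = deg G0 z + (if z \<in> {u,w} then 1 else 0)"
    unfolding G1_def by (rule deg_insert[OF fG0(1) n1])
  have d2: "\<And>z. deg G2 z = deg G1 z + (if z \<in> {v,w} then 1 else 0)"
    unfolding G2_def by (rule deg_insert[OF fG0(2) n2])
  have dw: "deg G w = 0" using deg_zero w by blast
  have d0w: "deg G0 w = 0" using dG[of w] dw by simp
  have "line_graph_edges G2 = line_graph_edges G + 1"
    using L1 L2 L3 d1[of v] d1[of w] d0w uv uw by simp
  moreover have "valid G2 (N+1) D"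
  proof (rule valid_intro[where v=v0])
    show "simple_graph G2" unfolding G2_def G1_def G0_def
      by (intro simple_insert simple_diff sg uw)
    show "card G2 = N + 1" unfolding G2_def using n2 n1 fG0 fG eG cG N
      by (simp add: G1_def G0_def)
    show "1 \<le> N + 1" by simp
    show "1 \<le> D" using D by simp
    show "deg G2 z \<le> D" for z
    proof (cases "z = w")
      case True then show ?thesis using d2[of w] d1[of w] d0w D by simp
    next
      case False then show ?thesis using d2[of z] d1[of z] dG[of z] le[rule_format, of z] uv uw
        by (auto split: if_splits)
    qed
    have "v0 \<noteq> w" using v0 dw D by auto
    then show "deg G2 v0 = D" using d2[of v0] d1[of v0] dG[of v0] v0 uv uw
      by (auto split: if_splits)
  qed
  ultimately show ?thesis using f_ge G(2) by fastforce
qed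



lemma constrA:
  assumes sg: "simple_graph G" and cG: "card G = N" and N: "1 \<le> N" and le: "\<forall>z. deg G z \<le> D"
    and v: "deg G v = D" and D: "1 \<le> D"
    and e: "{x,y} \<in> G" "x \<noteq> y" "v \<noteq> x" "v \<noteq> y" and nadj: "{v,x} \<notin> G"
  shows "line_graph_edges G + 1 \<le> f N (D+1)"
proof -
  have fG: "finite G" and two: "\<forall>e\<in>G. card e = 2" using sg simple_graph_def by auto
  define G0 where "G0 = G - {{x,y}}"
  define G1 where "G1 = insert {v,x} G0"
  have fG0: "finite G0" using fG unfolding G0_def by auto
  have two0: "\<forall>e'\<in>G0. card e' = 2" using two unfolding G0_def by auto
  have n1: "{v,x} \<notin> G0" using nadj unfolding G0_def by blast
  have n0: "{x,y} \<notin> G0" unfolding G0_def by simp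
  have hG: "G = insert {x,y} G0" using e unfolding G0_def by auto
  have L1: "line_graph_edges G = line_graph_edges G0 + deg G0 x + deg G0 y"
    unfolding hG by (rule L_insert[OF fG0 two0 e(2) n0])
  have L2: "line_graph_edges G1 = line_graph_edges G0 + deg G0 v + deg G0 x"
    unfolding G1_def by (rule L_insert[OF fG0 two0 e(3) n1])
  have dG: "\<And>z. deg G z = deg G0 z + (if z \<in> {x,y} then 1 else 0)"
    unfolding G0_def using deg_remove[OF fG e(1)] by simp
  have d1: "\<And>z. deg G1 z = deg G0 z + (if z \<in> {v,x} then 1 else 0)"
    unfolding G1_def by (rule deg_insert[OF fG0 n1])
  have "deg G0 v = D" using dG[of v] v e by simp
  moreover have "deg G0 y + 1 \<le> D" using dG[of y] le[rule_format, of y] by simp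
  ultimately have "line_graph_edges G + 1 \<le> line_graph_edges G1" using L1 L2 by simp
  moreover have "valid G1 N (D+1)"
  proof (rule valid_intro[where v=v])
    show "simple_graph G1" unfolding G1_def G0_def
      by (intro simple_insert simple_diff sg e)
    show "card G1 = N" unfolding G1_def using n1 fG0 cG e fG N
      by (simp add: G0_def)
    show "1 \<le> N" by fact
    show "1 \<le> D + 1" by simp
    show "deg G1 z \<le> D + 1" for z
      using d1[of z] dG[of z] le[rule_format, of z] by (auto split: if_splits)
    show "deg G1 v = D + 1" using d1[of v] \<open>deg G0 v = D\<close> by simp
  qed
  ultimately show ?thesis using f_ge by fastforce
qed

lemma constrB:
  assumes sg: "simple_graph G" and cG: "card G = N" and N: "1 \<le> N" and le: "\<forall>z. deg G z \<le> D"
    and v: "deg G v = D" and D: "1 \<le> D"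
    and e: "{x,y} \<in> G" "x \<noteq> y" "v \<noteq> x" "v \<noteq> y"
  shows "line_graph_edges G + D + 2 \<le> f N (D+1) + deg G x + deg G y"
proof -
  have fG: "finite G" and two: "\<forall>e\<in>G. card e = 2" using sg simple_graph_def by auto
  obtain w where w: "w \<notin> verts G" using fresh_vertex sg by blast
  have vw: "v \<noteq> w" using w v D deg_zero by force
  have wG: "\<And>e'. e' \<in> G \<Longrightarrow> w \<notin> e'" using w fresh_notin by blast
  define G0 where "G0 = G - {{x,y}}"
  define G1 where "G1 = insert {v,w} G0"
  have fG0: "finite G0" using fG unfolding G0_def by auto
  have two0: "\<forall>e'\<in>G0. card e' = 2" using two unfolding G0_def by auto
  have n1: "{v,w} \<notin> G0" using wG unfolding G0_def by blast
  have n0: "{x,y} \<notin> G0" unfolding G0_def by simp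
  have hG: "G = insert {x,y} G0" using e unfolding G0_def by auto
  have L1: "line_graph_edges G = line_graph_edges G0 + deg G0 x + deg G0 y"
    unfolding hG by (rule L_insert[OF fG0 two0 e(2) n0])
  have L2: "line_graph_edges G1 = line_graph_edges G0 + deg G0 v + deg G0 w"
    unfolding G1_def by (rule L_insert[OF fG0 two0 vw n1])
  have dG: "\<And>z. deg G z = deg G0 z + (if z \<in> {x,y} then 1 else 0)"
    unfolding G0_def using deg_remove[OF fG e(1)] by simp
  have d1: "\<And>z. deg G1 z = deg G0 z + (if z \<in> {v,w} then 1 else 0)"
    unfolding G1_def by (rule deg_insert[OF fG0 n1])
  have dw: "deg G w = 0" using deg_zero w by blast
  have d0w: "deg G0 w = 0" using dG[of w] dw by simp
  have "deg G0 v = D" using dG[of v] v e by simp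
  moreover have "deg G x = deg G0 x + 1" "deg G y = deg G0 y + 1" using dG[of x] dG[of y] by auto
  ultimately have eq: "line_graph_edges G1 + deg G x + deg G y = line_graph_edges G + D + 2"
    using L1 L2 d0w by simp
  moreover have "valid G1 N (D+1)"
  proof (rule valid_intro[where v=v])
    show "simple_graph G1" unfolding G1_def G0_def
      by (intro simple_insert simple_diff sg vw)
    show "card G1 = N" unfolding G1_def using n1 fG0 cG e fG N
      by (simp add: G0_def)
    show "1 \<le> N" by fact
    show "1 \<le> D + 1" by simp
    show "deg G1 z \<le> D + 1" for z
      using d1[of z] dG[of z] le[rule_format, of z] by (auto split: if_splits)
    show "deg G1 v = D + 1" using d1[of v] \<open>deg G0 v = D\<close> by simp
  qed
  then have "line_graph_edges G1 \<le> f N (D+1)" by (rule f_ge)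
  ultimately show ?thesis by linarith
qed

lemma count_bound:
  assumes sg: "simple_graph G" and cG: "card G = N" and v: "deg G v = D"
    and e: "{x,y} \<in> G" "x \<noteq> y" "v \<noteq> x" "v \<noteq> y" and ax: "{v,x} \<in> G" and ay: "{v,y} \<in> G"
  shows "deg G x + deg G y \<le> N - D + 3"
proof -
  have fG: "finite G" and two: "\<forall>e\<in>G. card e = 2" using sg simple_graph_def by auto
  define Ax where "Ax = {e\<in>G. x\<in>e} - {{v,x}}"
  define Ay where "Ay = {e\<in>G. y\<in>e} - {{v,y}}"
  define R where "R = G - {e\<in>G. v\<in>e}"
  have fA: "finite Ax" "finite Ay" unfolding Ax_def Ay_def using fG by auto
  have cAx: "card Ax = deg G x - 1" unfolding Ax_def deg_def using ax fG by (simp add: card_Diff_singleton)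
  have cAy: "card Ay = deg G y - 1" unfolding Ay_def deg_def using ay fG by (simp add: card_Diff_singleton)
  have px: "deg G x \<ge> 1" "deg G y \<ge> 1" using deg_pos[OF sg] edge_verts[OF e(1)] by auto
  have cR: "card R = N - D" unfolding R_def using cG v fG unfolding deg_def
    by (subst card_Diff_subset) auto
  have sub: "Ax \<union> Ay \<subseteq> R"
  proof
    fix e' assume h: "e' \<in> Ax \<union> Ay"
    then have e'G: "e' \<in> G" unfolding Ax_def Ay_def by auto
    have "v \<notin> e'"
    proof
      assume ve: "v \<in> e'"
      show False
      proof (cases "e' \<in> Ax")
        case True
        then have "x \<in> e'" "e' \<noteq> {v,x}" unfolding Ax_def by auto
        then show False using two_elems[of e' v x] two e'G ve e by auto
      next
        case False
        then have "e' \<in> Ay" using h by blast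
        then have "y \<in> e'" "e' \<noteq> {v,y}" unfolding Ay_def by auto
        then show False using two_elems[of e' v y] two e'G ve e by auto
      qed
    qed
    then show "e' \<in> R" unfolding R_def using e'G by blast
  qed
  have int: "Ax \<inter> Ay \<subseteq> {{x,y}}"
  proof
    fix e' assume "e' \<in> Ax \<inter> Ay"
    then have "e' \<in> G" "x \<in> e'" "y \<in> e'" unfolding Ax_def Ay_def by auto
    then show "e' \<in> {{x,y}}" using two_elems[of e' x y] two e by auto
  qed
  have fR: "finite R" unfolding R_def using fG by auto
  have "card (Ax \<union> Ay) \<le> N - D" using card_mono[OF fR sub] cR by simp
  moreover have "card (Ax \<inter> Ay) \<le> 1" using card_mono[OF _ int] by simp
  moreover have "card Ax + card Ay = card (Ax \<union> Ay) + card (Ax \<inter> Ay)"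
    using card_Un_Int[OF fA] .
  ultimately show ?thesis using cAx cAy px by linarith
qed



lemma edge_avoid:
  assumes sg: "simple_graph G" and cG: "card G = N" and v: "deg G v = D" and DN: "D < N"
  shows "\<exists>x y. {x,y} \<in> G \<and> x \<noteq> y \<and> v \<noteq> x \<and> v \<noteq> y"
proof -
  have fG: "finite G" and two: "\<forall>e\<in>G. card e = 2" using sg simple_graph_def by auto
  have "{e\<in>G. v \<in> e} \<noteq> G"
  proof
    assume "{e\<in>G. v \<in> e} = G"
    then have "deg G v = card G" unfolding deg_def by simp
    then show False using v cG DN by simp
  qed
  then obtain e where e: "e \<in> G" "v \<notin> e" by blast
  then have "card e = 2" using two by blast
  then obtain x y where "e = {x,y}" "x \<noteq> y" unfolding card_2_iff by blast
  then show ?thesis using e by blast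
qed

lemma choose2_mono: "a \<le> b \<Longrightarrow> a choose 2 \<le> (b::nat) choose 2"
  unfolding choose_two by (intro div_le_mono mult_le_mono diff_le_mono) auto

lemma part3:
  assumes D: "1 \<le> D" and NC: "(D + 1) choose 2 < N"
  shows "f N D + 1 \<le> f N (D+1)"
proof -
  have "D \<le> (D + 1) choose 2" using D by (simp add: numeral_2_eq_2)
  then have DN: "D < N" using NC by simp
  have N: "1 \<le> N" using DN by simp
  have DN': "D \<le> N" using DN by simp
  obtain G where G: "valid G N D" "line_graph_edges G = f N D" using attained[OF D DN'] by blast
  have sg: "simple_graph G" and cG: "card G = N" and le: "\<forall>z. deg G z \<le> D"
    and "\<exists>v. deg G v = D" using valid_dest[OF G(1) N] by auto
  then obtain v where v: "deg G v = D" by blast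
  have fG: "finite G" and two: "\<forall>e\<in>G. card e = 2" using sg simple_graph_def by auto
  have "\<exists>x y. {x,y} \<in> G \<and> x \<noteq> y \<and> v \<noteq> x \<and> v \<noteq> y \<and> {v,x} \<notin> G"
  proof (rule ccontr)
    assume "\<not> ?thesis"
    then have H: "\<And>x y. {x,y} \<in> G \<Longrightarrow> x \<noteq> y \<Longrightarrow> v \<noteq> x \<Longrightarrow> v \<noteq> y \<Longrightarrow> {v,x} \<in> G" by blast
    define Nv where "Nv = {u. {v,u} \<in> G}"
    define S where "S = insert v Nv"
    have inj: "inj_on (\<lambda>u. {v,u}) Nv" unfolding inj_on_def by (auto simp: doubleton_eq_iff)
    have img: "(\<lambda>u. {v,u}) ` Nv \<subseteq> {e\<in>G. v \<in> e}" unfolding Nv_def by auto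
    have "card Nv \<le> card {e\<in>G. v \<in> e}" using card_inj_on_le[OF inj img] fG by simp
    then have cNv: "card Nv \<le> D" using v unfolding deg_def by simp
    have "Nv \<subseteq> verts G" unfolding Nv_def verts_def by blast
    then have fNv: "finite Nv" using verts_finite[OF sg] finite_subset by blast
    have cS: "card S \<le> D + 1" unfolding S_def using fNv cNv
      by (simp add: card_insert_if)
    have fS: "finite S" unfolding S_def using fNv by simp
    have sub: "G \<subseteq> {A. A \<subseteq> S \<and> card A = 2}"
    proof
      fix e assume eG: "e \<in> G"
      then have "card e = 2" using two by blast
      then obtain a b where ab: "e = {a,b}" "a \<noteq> b" unfolding card_2_iff by blast
      have "a \<in> S \<and> b \<in> S"
      proof (cases "v = a")
        case True then show ?thesis using eG ab unfolding S_def Nv_def by auto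
      next
        case F1: False
        show ?thesis
        proof (cases "v = b")
          case True then show ?thesis using eG ab unfolding S_def Nv_def by (auto simp: insert_commute)
        next
          case False
          have "{v,a} \<in> G" using H[of a b] eG ab F1 False by simp
          moreover have "{v,b} \<in> G" using H[of b a] eG ab F1 False by (simp add: insert_commute)
          ultimately show ?thesis unfolding S_def Nv_def by auto
        qed
      qed
      then show "e \<in> {A. A \<subseteq> S \<and> card A = 2}" using ab \<open>card e = 2\<close> by auto
    qed
    have "card G \<le> card {A. A \<subseteq> S \<and> card A = 2}"
      by (rule card_mono[OF _ sub]) (use fS in simp)
    also have "\<dots> = card S choose 2" using n_subsets[OF fS] by simp
    also have "\<dots> \<le> (D + 1) choose 2" using choose2_mono[OF cS] .
    finally show False using cG NC by simp
  qed
  then obtain x y where xy: "{x,y} \<in> G" "x \<noteq> y" "v \<noteq> x" "v \<noteq> y" "{v,x} \<notin> G" by blast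
  show ?thesis using constrA[OF sg cG N le v D xy] G(2) by simp
qed

lemma part4:
  assumes N: "1 \<le> N" and DN: "D + 1 \<le> N" and D: "1 \<le> D" and k: "N + 1 + k \<le> 2 * D" "k \<le> 1"
  shows "f N D + k \<le> f N (D+1)"
proof -
  have DN': "D \<le> N" using DN by simp
  obtain G where G: "valid G N D" "line_graph_edges G = f N D" using attained[OF D DN'] by blast
  have sg: "simple_graph G" and cG: "card G = N" and le: "\<forall>z. deg G z \<le> D"
    and "\<exists>v. deg G v = D" using valid_dest[OF G(1) N] by auto
  then obtain v where v: "deg G v = D" by blast
  obtain x y where xy: "{x,y} \<in> G" "x \<noteq> y" "v \<noteq> x" "v \<noteq> y"
    using edge_avoid[OF sg cG v] DN by auto
  show ?thesis
  proof (cases "{v,x} \<in> G")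
    case False
    then show ?thesis using constrA[OF sg cG N le v D xy] G(2) k by simp
  next
    case ax: True
    show ?thesis
    proof (cases "{v,y} \<in> G")
      case False
      have "{y,x} \<in> G" using xy(1) by (simp add: insert_commute)
      then show ?thesis using constrA[OF sg cG N le v D _ _ xy(4) xy(3) False] xy G(2) k by simp
    next
      case True
      have "deg G x + deg G y \<le> N - D + 3" by (rule count_bound[OF sg cG v xy ax True])
      then show ?thesis using constrB[OF sg cG N le v D xy] G(2) k DN by linarith
    qed
  qed
qed

theorem mainTheorem11:
  fixes N :: nat
  assumes "N \<ge> 1"
  shows "f N 1 = 0 \<and>
    (\<forall>D. N \<ge> D \<and> D \<ge> 2 \<longrightarrow> f (N + 1) D \<ge> f N D + 1) \<and>
    (\<forall>D. D \<ge> 1 \<and> N > (D + 1) choose 2 \<longrightarrow> f N (D + 1) \<ge> f N D + 1) \<and>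
    (\<forall>D. D + 1 \<le> N \<longrightarrow>
           (real D > real N / 2 \<longrightarrow> f N (D + 1) \<ge> f N D) \<and>
           (int D > \<lceil>real N / 2\<rceil> \<longrightarrow> f N (D + 1) \<ge> f N D + 1))"
proof (intro conjI allI impI)
  show "f N 1 = 0" using part1 assms by simp
next
  fix D assume "N \<ge> D \<and> D \<ge> 2" then show "f (N + 1) D \<ge> f N D + 1" using part2 assms by simp
next
  fix D assume "D \<ge> 1 \<and> N > (D + 1) choose 2" then show "f N (D + 1) \<ge> f N D + 1" using part3 by simp
next
  fix D assume DN: "D + 1 \<le> N" and h: "real D > real N / 2"
  then have "N + 1 + 0 \<le> 2 * D" by linarith
  moreover have D1: "1 \<le> D" using assms h by linarith
  ultimately show "f N (D + 1) \<ge> f N D" using part4[OF assms DN D1, of 0] by simp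
next
  fix D assume DN: "D + 1 \<le> N" and h: "int D > \<lceil>real N / 2\<rceil>"
  then have "int D \<ge> \<lceil>real N / 2\<rceil> + 1" by simp
  then have "real D \<ge> real N / 2 + 1" using le_of_int_ceiling[of "real N / 2"] by linarith
  then have "N + 1 + 1 \<le> 2 * D" by linarith
  moreover have D1: "1 \<le> D" using assms \<open>N + 1 + 1 \<le> 2 * D\<close> by linarith
  ultimately show "f N (D + 1) \<ge> f N D + 1" using part4[OF assms DN D1, of 1] by simp
qed

end
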